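(* Suppose $F$ is symmetric, i.e. $F(-i)=1-F(i)$ for all $i\in[-1/2,1/2]$, and let $R\in(0,1)$, $\beta=F(1/2-R)$. Then every receiver type $i\in[-1/2,1/2]$ accepts the recommendation (i.e. $U_i^B\ge U_i^0$ and $U_i^0\ge U_i^D$), and the value of the recommendation system is $V=\pi^B\Delta_O^B$.
   Context: Setting. Consumer types are $i\in[-1/2,1/2]$, distributed according to a continuous cumulative distribution function $F$ with full support on $[-1/2,1/2]$. A product has a quality vector $(Q_1,Q_2)\in\{0,1\}^2$; a type-$i$ consumer gets payoff $(1/2+i)Q_1+(1/2-i)Q_2$ from it. The versions $(1,1),(1,0),(0,1),(0,0)$ have prior probabilities $q_H,q_1,q_2,q_L$ respectively, all strictly positive and summing to $1$. One product carries a recommendation from a sender whose type is drawn from $F$ independently of the product; given a threshold $R\in(0,1)$, the sender gives a buy recommendation $B$ if her payoff from the product is at least $R$ and a don't-buy recommendation $D$ otherwise. Let $\phi_1(R)=1-F(R-1/2)$, $\phi_2(R)=F(1/2-R)$ (under symmetry both equal $\beta$), $\pi^B=q_H+q_1\phi_1(R)+q_2\phi_2(R)$ and $\pi^D=1-\pi^B$. Posteriors: $p^B_H=q_H/\pi^B$, $p^B_1=q_1\phi_1(R)/\pi^B$, $p^B_2=q_2\phi_2(R)/\pi^B$, $p^B_L=0$; $p^D_H=0$, $p^D_1=q_1(1-\phi_1(R))/\pi^D$, $p^D_2=q_2(1-\phi_2(R))/\pi^D$, $p^D_L=q_L/\pi^D$. For $r\in\{B,D\}$ let $U_i^r=p_H^r+(1/2+i)p_1^r+(1/2-i)p_2^r$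 and $U_i^0=q_H+(1/2+i)q_1+(1/2-i)q_2$. The objective effect of the buy recommendation is $\Delta_O^B=p_H^B-q_H+\frac{p_1^B-q_1}{2}+\frac{p_2^B-q_2}{2}$. The value of the recommendation system is $V=\pi^B\int_{-1/2}^{1/2}\max\{U_i^B-U_i^0,0\}\,dF(i)+\pi^D\int_{-1/2}^{1/2}\max\{U_i^D-U_i^0,0\}\,dF(i)$, the expected payoff gain of a receiver drawn from $F$ who optimally chooses between the recommended product and an unrecommended alternative. *)

theory Defs
  imports "HOL-Analysis.Analysis"
begin

text \<open>Consumer types live in [-1/2,1/2]; F is the CDF of the type distribution (a function
  on all reals, equal to 0 below -1/2 and 1 above 1/2).\<close>

definition phi1 :: "(real \<Rightarrow> real) \<Rightarrow> real \<Rightarrow> real" where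
  "phi1 F R = 1 - F (R - 1/2)"

definition phi2 :: "(real \<Rightarrow> real) \<Rightarrow> real \<Rightarrow> real" where
  "phi2 F R = F (1/2 - R)"

definition piB :: "(real \<Rightarrow> real) \<Rightarrow> real \<Rightarrow> real \<Rightarrow> real \<Rightarrow> real \<Rightarrow> real" where
  "piB F qH q1 q2 R = qH + q1 * phi1 F R + q2 * phi2 F R"

definition piD :: "(real \<Rightarrow> real) \<Rightarrow> real \<Rightarrow> real \<Rightarrow> real \<Rightarrow> real \<Rightarrow> real" where
  "piD F qH q1 q2 R = 1 - piB F qH q1 q2 R"

definition pB_H where "pB_H F qH q1 q2 R = qH / piB F qH q1 q2 R"
definition pB_1 where "pB_1 F qH q1 q2 R = q1 * phi1 F R / piB F qH q1 q2 R"
definition pB_2 where "pB_2 F qH q1 q2 R = q2 * phi2 F R / piB F qH q1 q2 R"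

definition pD_H :: "(real \<Rightarrow> real) \<Rightarrow> real \<Rightarrow> real \<Rightarrow> real \<Rightarrow> real \<Rightarrow> real" where
  "pD_H F qH q1 q2 R = 0"
definition pD_1 where "pD_1 F qH q1 q2 R = q1 * (1 - phi1 F R) / piD F qH q1 q2 R"
definition pD_2 where "pD_2 F qH q1 q2 R = q2 * (1 - phi2 F R) / piD F qH q1 q2 R"

definition UB :: "(real \<Rightarrow> real) \<Rightarrow> real \<Rightarrow> real \<Rightarrow> real \<Rightarrow> real \<Rightarrow> real \<Rightarrow> real" where
  "UB F qH q1 q2 R i = pB_H F qH q1 q2 R + (1/2 + i) * pB_1 F qH q1 q2 R
                        + (1/2 - i) * pB_2 F qH q1 q2 R"

definition UD :: "(real \<Rightarrow> real) \<Rightarrow> real \<Rightarrow> real \<Rightarrow> real \<Rightarrow> real \<Rightarrow> real \<Rightarrow> real" where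
  "UD F qH q1 q2 R i = pD_H F qH q1 q2 R + (1/2 + i) * pD_1 F qH q1 q2 R
                        + (1/2 - i) * pD_2 F qH q1 q2 R"

definition U0 :: "real \<Rightarrow> real \<Rightarrow> real \<Rightarrow> real \<Rightarrow> real" where
  "U0 qH q1 q2 i = qH + (1/2 + i) * q1 + (1/2 - i) * q2"

definition DeltaOB :: "(real \<Rightarrow> real) \<Rightarrow> real \<Rightarrow> real \<Rightarrow> real \<Rightarrow> real \<Rightarrow> real" where
  "DeltaOB F qH q1 q2 R = pB_H F qH q1 q2 R - qH + (pB_1 F qH q1 q2 R - q1) / 2
                          + (pB_2 F qH q1 q2 R - q2) / 2"

definition Vrec :: "(real \<Rightarrow> real) \<Rightarrow> real \<Rightarrow> real \<Rightarrow> real \<Rightarrow> real \<Rightarrow> real" where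
  "Vrec F qH q1 q2 R =
     piB F qH q1 q2 R * (LINT i:{-1/2..1/2}|interval_measure F.
                            max (UB F qH q1 q2 R i - U0 qH q1 q2 i) 0)
   + piD F qH q1 q2 R * (LINT i:{-1/2..1/2}|interval_measure F.
                            max (UD F qH q1 q2 R i - U0 qH q1 q2 i) 0)"

end

theory Submission
  imports Defs
begin

lemma refl_measure:
  fixes F :: "real \<Rightarrow> real"
  assumes F_cont: "continuous_on UNIV F"
    and F_mono: "mono F"
    and F_sym: "\<And>x. F (-x) = 1 - F x"
  shows "distr (interval_measure F) borel uminus = interval_measure F"
proof -
  let ?M = "interval_measure F"
  have mo: "\<And>x y. x \<le> y \<Longrightarrow> F x \<le> F y" using F_mono by (simp add: mono_def)
  have rc: "\<And>a. continuous (at_right a) F"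
    using F_cont by (simp add: continuous_on_eq_continuous_within continuous_at_imp_continuous_within)
  have Ioc: "emeasure ?M {a<..b} = F b - F a" if "a \<le> b" for a b
    using emeasure_interval_measure_Ioc[OF that mo rc] by simp
  have Icc: "emeasure ?M {a..b} = F b - F a" if "a \<le> b" for a b
    using emeasure_interval_measure_Icc[OF that mo F_cont] by simp
  have Ico: "emeasure ?M {a..<b} = F b - F a" if "a \<le> b" for a b
  proof -
    have "emeasure ?M {a..b} = emeasure ?M {a..<b} + emeasure ?M {b..b}"
      using that by (subst plus_emeasure) (auto intro!: arg_cong[where f="emeasure ?M"])
    moreover have "emeasure ?M {b..b} = 0" using Icc[of b b] by simp
    ultimately show ?thesis using Icc[OF that] by simp
  qed
  have E: "emeasure (distr ?M borel uminus) {a<..b} = emeasure ?M {a<..b}" for a b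
  proof (cases "a \<le> b")
    case True
    have "emeasure (distr ?M borel uminus) {a<..b} = emeasure ?M (uminus -` {a<..b})"
      by (subst emeasure_distr) auto
    also have "uminus -` {a<..b} = {-b..<-a::real}" by auto
    also have "emeasure ?M {-b..<-a} = F (-a) - F (-b)" using True by (intro Ico) simp
    also have "\<dots> = F b - F a" using F_sym by simp
    finally show ?thesis using Ioc[OF True] by simp
  next
    case False then show ?thesis by simp
  qed
  show ?thesis
  proof (rule measure_eqI_generator_eq_countable[where E="range (\<lambda>(a, b). {a <.. b::real})"
        and \<Omega>=UNIV and A="range (\<lambda>n::nat. {- real n <.. real n})"])
    show "Int_stable (range (\<lambda>(a, b). {a <.. b::real}))"
    proof (rule Int_stableI)
      fix A B assume "A \<in> range (\<lambda>(a, b). {a <.. b::real})" "B \<in> range (\<lambda>(a, b). {a <.. b::real})"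
      then obtain a b c d where "A = {a<..b}" "B = {c<..d}" by auto
      moreover have "{a<..b} \<inter> {c<..d} = {max a c<..min b d}" by auto
      ultimately show "A \<inter> B \<in> range (\<lambda>(a, b). {a <.. b::real})" by auto
    qed
    show "range (\<lambda>(a, b). {a <.. b::real}) \<subseteq> Pow UNIV" by auto
    have SB: "sets borel = sigma_sets UNIV (range (\<lambda>(a, b). {a <.. b::real}))"
      by (subst borel_sigma_sets_Ioc) (rule sets_measure_of, simp)
    show "emeasure (distr ?M borel uminus) X = emeasure ?M X"
      if "X \<in> range (\<lambda>(a, b). {a <.. b::real})" for X
    proof -
      from that obtain a b where "X = {a<..b}" by auto
      then show ?thesis using E by simp
    qed
    show "sets (distr ?M borel uminus) = sigma_sets UNIV (range (\<lambda>(a, b). {a <.. b::real}))"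
      using SB by simp
    show "sets ?M = sigma_sets UNIV (range (\<lambda>(a, b). {a <.. b::real}))"
      using SB by simp
    show "range (\<lambda>n::nat. {- real n <.. real n}) \<subseteq> range (\<lambda>(a, b). {a <.. b::real})" by auto
    show "\<Union> (range (\<lambda>n::nat. {- real n <.. real n})) = UNIV"
    proof safe
      fix x :: real
      obtain n :: nat where "\<bar>x\<bar> < real n" using reals_Archimedean2 by blast
      then have "x \<in> {- real n <.. real n}" by auto
      then show "x \<in> \<Union> (range (\<lambda>n::nat. {- real n <.. real n}))" by blast
    qed auto
    show "countable (range (\<lambda>n::nat. {- real n <.. real n}))" by auto
    show "emeasure (distr ?M borel uminus) X \<noteq> \<infinity>"
      if "X \<in> range (\<lambda>n::nat. {- real n <.. real n})" for X
    proof -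
      from that obtain n :: nat where "X = {- real n <.. real n}" by auto
      then show ?thesis using E Ioc[of "- real n" "real n"] by simp
    qed
  qed
qed


lemma lin_integral:
  fixes F :: "real \<Rightarrow> real" and a c :: real
  assumes F_cont: "continuous_on UNIV F"
    and F_mono: "mono F"
    and F_sym: "\<And>x. F (-x) = 1 - F x"
    and F1: "F (1/2) = 1" and F0: "F (-1/2) = 0"
  shows "(LINT i:{-1/2..1/2}|interval_measure F. a + c * i) = a"
proof -
  let ?M = "interval_measure F"
  let ?S = "{-1/2..1/2::real}"
  have mo: "\<And>x y. x \<le> y \<Longrightarrow> F x \<le> F y" using F_mono by (simp add: mono_def)
  have mS: "emeasure ?M ?S = 1"
    using emeasure_interval_measure_Icc[of "-1/2" "1/2" F, OF _ mo F_cont] F1 F0 by simp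
  then have mS': "measure ?M ?S = 1" by (simp add: measure_def)
  have int1: "integrable ?M (indicator ?S :: real \<Rightarrow> real)"
    using mS by (intro integrable_real_indicator) auto
  have int2: "integrable ?M (\<lambda>x. indicator ?S x * x :: real)"
  proof (rule Bochner_Integration.integrable_bound[OF int1])
    show "(\<lambda>x. indicator ?S x * x :: real) \<in> borel_measurable ?M" by simp
    show "AE x in ?M. norm (indicator ?S x * x :: real) \<le> norm (indicator ?S x :: real)"
      by (intro AE_I2) (auto simp: indicator_def)
  qed
  let ?I = "LINT x|?M. indicator ?S x * x :: real"
  have "?I = (LINT x|distr ?M borel uminus. indicator ?S x * x :: real)"
    using refl_measure[OF F_cont F_mono F_sym] by simp
  also have "\<dots> = (LINT x|?M. indicator ?S (-x) * (-x) :: real)"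
    by (subst integral_distr) auto
  also have "\<dots> = (LINT x|?M. - (indicator ?S x * x) :: real)"
    by (rule Bochner_Integration.integral_cong) (auto simp: indicator_def)
  also have "\<dots> = - ?I" by simp
  finally have I0: "?I = 0" by simp
  have "(LINT i:?S|?M. a + c * i) = (LINT x|?M. a * indicator ?S x + c * (indicator ?S x * x))"
    unfolding set_lebesgue_integral_def
    by (rule Bochner_Integration.integral_cong) (auto simp: indicator_def)
  also have "\<dots> = a * (LINT x|?M. indicator ?S x) + c * ?I"
    using int1 int2 by simp
  also have "\<dots> = a" using I0 mS' by simp
  finally show ?thesis .
qed


theorem proposition4:
  fixes F :: "real \<Rightarrow> real" and qH q1 q2 qL R :: real
  assumes F_cont: "continuous_on UNIV F"
    and F_mono: "mono F"
    and F_below: "\<And>x. x \<le> -1/2 \<Longrightarrow> F x = 0"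
    and F_above: "\<And>x. x \<ge> 1/2 \<Longrightarrow> F x = 1"
    and F_support: "strict_mono_on {-1/2..1/2} F"
    and F_symm: "\<And>i. i \<in> {-1/2..1/2} \<Longrightarrow> F (-i) = 1 - F i"
    and q_pos: "qH > 0" "q1 > 0" "q2 > 0" "qL > 0"
    and q_sum: "qH + q1 + q2 + qL = 1"
    and R: "0 < R" "R < 1"
  shows "(\<forall>i\<in>{-1/2..1/2}. UB F qH q1 q2 R i \<ge> U0 qH q1 q2 i
                          \<and> U0 qH q1 q2 i \<ge> UD F qH q1 q2 R i)
         \<and> Vrec F qH q1 q2 R = piB F qH q1 q2 R * DeltaOB F qH q1 q2 R"
proof -
  define \<beta> where "\<beta> = F (1/2 - R)"
  have Fs: "F (-x) = 1 - F x" for x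
  proof -
    consider "x \<le> -1/2" | "x \<ge> 1/2" | "x \<in> {-1/2..1/2}" by force
    then show ?thesis
    proof cases
      case 1 then show ?thesis using F_below[of x] F_above[of "-x"] by simp
    next
      case 2 then show ?thesis using F_below[of "-x"] F_above[of x] by simp
    qed (rule F_symm)
  qed
  have F1: "F (1/2) = 1" and F0: "F (-1/2) = 0" using F_above F_below by auto
  have ph1: "phi1 F R = \<beta>" unfolding phi1_def \<beta>_def using Fs[of "1/2 - R"] by simp
  have ph2: "phi2 F R = \<beta>" unfolding phi2_def \<beta>_def by simp
  have b0: "0 < \<beta>"
    using strict_mono_onD[OF F_support, of "-1/2" "1/2 - R"] R F0 unfolding \<beta>_def by simp
  have b1: "\<beta> < 1"
    using strict_mono_onD[OF F_support, of "1/2 - R" "1/2"] R F1 unfolding \<beta>_def by simp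
  define P where "P = qH + (q1 + q2) * \<beta>"
  have piB_eq: "piB F qH q1 q2 R = P" unfolding piB_def P_def ph1 ph2 by (simp add: algebra_simps)
  have piD_eq: "piD F qH q1 q2 R = 1 - P" unfolding piD_def piB_eq ..
  have P0: "P > 0" unfolding P_def using q_pos b0 by (simp add: add_pos_pos)
  have D_eq: "1 - P = (1 - \<beta>) * (q1 + q2) + qL" unfolding P_def using q_sum by (simp add: algebra_simps)
  have D0: "1 - P > 0" unfolding D_eq using q_pos b1 by (simp add: add_pos_pos)
  define K where "K i = qH * (1 - P) + (\<beta> - P) * ((1/2 + i) * q1 + (1/2 - i) * q2)" for i
  have Kpos: "K i \<ge> 0" if "i \<in> {-1/2..1/2}" for i
  proof -
    define w where "w = (1/2 + i) * q1 + (1/2 - i) * q2"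
    have w0: "w \<ge> 0" unfolding w_def using that q_pos by (auto intro!: add_nonneg_nonneg mult_nonneg_nonneg)
    have w1: "q1 + q2 - w \<ge> 0"
    proof -
      have "q1 + q2 - w = (1/2 - i) * q1 + (1/2 + i) * q2" unfolding w_def by (simp add: algebra_simps)
      also have "\<dots> \<ge> 0" using that q_pos by (auto intro!: add_nonneg_nonneg mult_nonneg_nonneg)
      finally show ?thesis .
    qed
    have "K i = qH * (1 - (qH + (q1 + q2) * \<beta>)) + (\<beta> - (qH + (q1 + q2) * \<beta>)) * w"
      unfolding K_def w_def[symmetric] P_def
      using q_sum by (simp add: algebra_simps right_diff_distrib)
      also have "\<dots> = qH * (1 - \<beta>) * (q1 + q2 - w) + \<beta> * (1 - qH - q1 - q2) * w + qH * (1 - qH - q1 - q2)"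
        by (simp add: algebra_simps)
      also have "\<dots> = qH * (1 - \<beta>) * (q1 + q2 - w) + \<beta> * qL * w + qH * qL"
      proof -
        have qL: "qL = 1 - qH - q1 - q2" using q_sum by simp
        show ?thesis unfolding qL ..
      qed
    also have "\<dots> \<ge> 0" using w0 w1 q_pos b0 b1
      by (intro add_nonneg_nonneg mult_nonneg_nonneg) auto
    finally show ?thesis .
  qed
  have UBeq: "UB F qH q1 q2 R i - U0 qH q1 q2 i = K i / P" for i
    using P0 unfolding UB_def U0_def pB_H_def pB_1_def pB_2_def piB_eq ph1 ph2 K_def
    by (simp add: field_simps)
  have UDeq: "U0 qH q1 q2 i - UD F qH q1 q2 R i = K i / (1 - P)" for i
  proof -
    define D where "D = 1 - P"
    have Dn: "D \<noteq> 0" using D0 unfolding D_def by simp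
    have PD: "P = 1 - D" unfolding D_def by simp
    show ?thesis
      unfolding UD_def U0_def pD_H_def pD_1_def pD_2_def piD_eq ph1 ph2 K_def D_def[symmetric] PD
      using Dn by (simp add: field_simps)
  qed
  have part1: "\<forall>i\<in>{-1/2..1/2}. UB F qH q1 q2 R i \<ge> U0 qH q1 q2 i
                          \<and> U0 qH q1 q2 i \<ge> UD F qH q1 q2 R i"
  proof
    fix i :: real assume i: "i \<in> {-1/2..1/2}"
    have "K i / P \<ge> 0" "K i / (1 - P) \<ge> 0" using Kpos[OF i] P0 D0 by auto
    then show "UB F qH q1 q2 R i \<ge> U0 qH q1 q2 i \<and> U0 qH q1 q2 i \<ge> UD F qH q1 q2 R i"
      using UBeq[of i] UDeq[of i] by linarith
  qed
  define c where "c = (pB_1 F qH q1 q2 R - q1) - (pB_2 F qH q1 q2 R - q2)"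
  have lin: "UB F qH q1 q2 R i - U0 qH q1 q2 i = DeltaOB F qH q1 q2 R + c * i" for i
    unfolding UB_def U0_def DeltaOB_def c_def by (simp add: field_simps)
  let ?M = "interval_measure F"
  let ?S = "{-1/2..1/2::real}"
  have int1: "(LINT i:?S|?M. max (UB F qH q1 q2 R i - U0 qH q1 q2 i) 0)
      = (LINT i:?S|?M. DeltaOB F qH q1 q2 R + c * i)"
    unfolding set_lebesgue_integral_def
  proof (rule Bochner_Integration.integral_cong)
    fix x show "indicator ?S x *\<^sub>R max (UB F qH q1 q2 R x - U0 qH q1 q2 x) 0
        = indicator ?S x *\<^sub>R (DeltaOB F qH q1 q2 R + c * x)"
    proof (cases "x \<in> ?S")
      case True
      then have "UB F qH q1 q2 R x \<ge> U0 qH q1 q2 x" using part1 by blast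
      then show ?thesis using True lin[of x] by simp
    qed simp
  qed simp
  have int2: "(LINT i:?S|?M. max (UD F qH q1 q2 R i - U0 qH q1 q2 i) 0) = 0"
    unfolding set_lebesgue_integral_def
  proof -
    have "(LINT x|?M. indicator ?S x *\<^sub>R max (UD F qH q1 q2 R x - U0 qH q1 q2 x) 0)
       = (LINT x|?M. 0)"
    proof (rule Bochner_Integration.integral_cong)
      fix x show "indicator ?S x *\<^sub>R max (UD F qH q1 q2 R x - U0 qH q1 q2 x) 0 = 0"
      proof (cases "x \<in> ?S")
        case True
        then have "UD F qH q1 q2 R x \<le> U0 qH q1 q2 x" using part1 by blast
        then show ?thesis using True by simp
      qed simp
    qed simp
    then show "(LINT x|?M. indicator ?S x *\<^sub>R max (UD F qH q1 q2 R x - U0 qH q1 q2 x) 0) = 0"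
      by simp
  qed
  have "Vrec F qH q1 q2 R = piB F qH q1 q2 R * DeltaOB F qH q1 q2 R"
    unfolding Vrec_def int1 int2
    using lin_integral[OF F_cont F_mono Fs F1 F0, of "DeltaOB F qH q1 q2 R" c] by simp
  with part1 show ?thesis by blast
qed

end
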